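(* Let $d$ be a positive integer and let $\mu$ be a balanced isotropic Borel probability measure on $\mathbb{S}^{d-1}$. If $\langle x,y\rangle\ge-\frac1d$ for all $x,y$ in the support of $\mu$, then $\mu$ is the uniform distribution over the vertices of a regular simplex, i.e. $\mu=\frac{1}{d+1}\sum_{j=1}^{d+1}\delta_{v_j}$ for some unit vectors $v_1,\dots,v_{d+1}\in\mathbb{S}^{d-1}$ with $\langle v_i,v_j\rangle=-\frac1d$ for all $i\ne j$.
   Context: A Borel probability measure $\mu$ on $\mathbb{S}^{d-1}$ is isotropic if $\int\langle x,y\rangle^2\,d\mu(x)=\frac1d$ for every $y\in\mathbb{S}^{d-1}$, and balanced if $\int x\,d\mu(x)=0$. *)

theory Defs
  imports "HOL-Probability.Probability"
begin

definition measure_support :: "'a::metric_space measure \<Rightarrow> 'a set" where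
  "measure_support M = {x. \<forall>e>0. emeasure M (ball x e) > 0}"

text \<open>A Borel probability measure on the unit sphere of the Euclidean space 'a
  (of dimension d = DIM('a)), represented as a probability measure on the Borel
  sets of 'a concentrated on the sphere.\<close>
definition sphere_prob :: "'a::euclidean_space measure \<Rightarrow> bool" where
  "sphere_prob M \<longleftrightarrow> prob_space M \<and> sets M = sets borel \<and> emeasure M (sphere 0 1) = 1"

definition isotropic :: "'a::euclidean_space measure \<Rightarrow> bool" where
  "isotropic M \<longleftrightarrow> (\<forall>y\<in>sphere (0::'a) 1. (\<integral>x. (x \<bullet> y)^2 \<partial>M) = 1 / real DIM('a))"

definition balanced :: "'a::euclidean_space measure \<Rightarrow> bool" where
  "balanced M \<longleftrightarrow> (\<integral>x. x \<partial>M) = (0::'a)"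

end

theory Submission
  imports Defs
begin

lemma supp_null:
  fixes M :: "'a::euclidean_space measure"
  assumes sets: "sets M = sets borel"
  shows "\<exists>N\<in>null_sets M. UNIV - measure_support M \<subseteq> N"
proof -
  define F where "F = {ball x e |x e. e > 0 \<and> emeasure M (ball x e) = 0}"
  obtain F' where F': "F' \<subseteq> F" "countable F'" "\<Union>F' = \<Union>F"
    using Lindelof[of F] unfolding F_def by auto
  have sub: "UNIV - measure_support M \<subseteq> \<Union>F"
  proof
    fix x assume "x \<in> UNIV - measure_support M"
    then obtain e where "e > 0" "\<not> emeasure M (ball x e) > 0"
      unfolding measure_support_def by auto
    then have "ball x e \<in> F" unfolding F_def by (auto simp: not_less)
    then show "x \<in> \<Union>F" using \<open>e > 0\<close> by (meson UnionI centre_in_ball)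
  qed
  have "(\<Union>B\<in>F'. B) \<in> null_sets M"
  proof (rule null_sets_UN')
    show "countable F'" by fact
    fix B assume "B \<in> F'"
    then have "B \<in> F" using F' by auto
    then obtain x e where "B = ball x e" "emeasure M (ball x e) = 0" unfolding F_def by blast
    then show "B \<in> null_sets M" using sets by (simp add: null_sets_def)
  qed
  moreover have "(\<Union>B\<in>F'. B) = \<Union>F" using F'(3) by simp
  ultimately show ?thesis using sub by metis
qed

lemma supp_closed:
  fixes M :: "'a::euclidean_space measure"
  assumes sets: "sets M = sets borel"
  shows "closed (measure_support M)"
  unfolding closed_def open_contains_ball
proof
  fix x assume "x \<in> - measure_support M"
  then obtain e where e: "e > 0" "\<not> emeasure M (ball x e) > 0"
    unfolding measure_support_def by auto
  have "ball x e \<subseteq> - measure_support M"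
  proof
    fix z assume z: "z \<in> ball x e"
    then have r: "e - dist x z > 0" by simp
    have "ball z (e - dist x z) \<subseteq> ball x e"
    proof
      fix w assume "w \<in> ball z (e - dist x z)"
      then have "dist z w < e - dist x z" by simp
      moreover have "dist x w \<le> dist x z + dist z w" by (rule dist_triangle)
      ultimately show "w \<in> ball x e" by simp
    qed
    then have "emeasure M (ball z (e - dist x z)) \<le> emeasure M (ball x e)"
      by (rule emeasure_mono) (simp add: sets)
    moreover have "emeasure M (ball x e) \<le> 0" using e(2) by (simp add: not_less)
    ultimately have "emeasure M (ball z (e - dist x z)) \<le> 0" by (rule order_trans)
    then have "\<not> emeasure M (ball z (e - dist x z)) > 0" by (simp add: not_less)
    then show "z \<in> - measure_support M" using r unfolding measure_support_def by blast
  qed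
  then show "\<exists>e>0. ball x e \<subseteq> - measure_support M" using e by auto
qed

locale simp_setting =
  fixes \<mu> :: "'a::euclidean_space measure" and d :: nat
  assumes d_def: "d = DIM('a)"
    and sp: "sphere_prob \<mu>" and iso: "isotropic \<mu>" and bal: "balanced \<mu>"
    and supp: "\<forall>x\<in>measure_support \<mu>. \<forall>y\<in>measure_support \<mu>. x \<bullet> y \<ge> - 1 / real d"
begin

definition "S = measure_support \<mu>"

lemma ps: "prob_space \<mu>" and sets: "sets \<mu> = sets borel" and sph: "emeasure \<mu> (sphere 0 1) = 1"
  using sp unfolding sphere_prob_def by auto

sublocale prob_space \<mu> by (rule ps)

lemma space_eq: "space \<mu> = UNIV" using sets_eq_imp_space_eq[OF sets] by simp

lemma meas: "f \<in> borel_measurable borel \<Longrightarrow> f \<in> borel_measurable \<mu>"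
  for f :: "'a \<Rightarrow> 'b::topological_space"
  unfolding measurable_cong_sets[OF sets refl] .

lemma dpos: "real d > 0" unfolding d_def by simp

lemma S_closed: "closed S" unfolding S_def using supp_closed[OF sets] .

lemma S_sets: "S \<in> sets \<mu>" using S_closed by (simp add: sets)

lemma Snull: "UNIV - S \<in> null_sets \<mu>"
proof -
  obtain N where N: "N \<in> null_sets \<mu>" "UNIV - S \<subseteq> N" using supp_null[OF sets] unfolding S_def by blast
  have "UNIV - S \<in> sets \<mu>" using S_closed sets by (simp add: closed_def Compl_eq_Diff_UNIV)
  then show ?thesis using null_sets_subset[OF N(1) _ N(2)] by blast
qed

lemma AES: "AE x in \<mu>. x \<in> S"
  using Snull by (intro AE_I[of _ _ "UNIV - S"]) auto

lemma sphnull: "emeasure \<mu> (UNIV - sphere 0 1) = 0"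
proof -
  have "emeasure \<mu> (space \<mu> - sphere 0 1) = emeasure \<mu> (space \<mu>) - emeasure \<mu> (sphere 0 1)"
    by (rule emeasure_compl) (auto simp: sets)
  then show ?thesis using sph space_eq emeasure_space_1 by simp
qed

lemma S_sph: "S \<subseteq> sphere 0 1"
proof
  fix x assume xS: "x \<in> S"
  show "x \<in> sphere 0 1"
  proof (rule ccontr)
    assume "x \<notin> sphere 0 1"
    moreover have "open (UNIV - sphere (0::'a) 1)" by (simp add: open_Diff)
    ultimately obtain e where e: "e > 0" "ball x e \<subseteq> UNIV - sphere 0 1"
      using open_contains_ball[of "UNIV - sphere (0::'a) 1"] by blast
    have "emeasure \<mu> (ball x e) \<le> emeasure \<mu> (UNIV - sphere 0 1)"
      using e(2) by (rule emeasure_mono) (auto simp: sets)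
    then have "emeasure \<mu> (ball x e) = 0" using sphnull by simp
    then show False using xS \<open>e > 0\<close> unfolding S_def measure_support_def by auto
  qed
qed

lemma unitS: "x \<in> S \<Longrightarrow> norm x = 1" using S_sph by auto

lemma ip_le: "x \<in> S \<Longrightarrow> norm y = 1 \<Longrightarrow> \<bar>x \<bullet> y\<bar> \<le> 1"
  using Cauchy_Schwarz_ineq2[of x y] unitS[of x] by simp

lemma intg:
  fixes f :: "'a \<Rightarrow> 'b::{banach,second_countable_topology}"
  assumes "f \<in> borel_measurable borel" "\<forall>y\<in>sphere 0 1. norm (f y) \<le> B"
  shows "integrable \<mu> f"
proof (rule integrable_const_bound[where B=B])
  show "AE x in \<mu>. norm (f x) \<le> B" using AES
  proof (rule eventually_mono)
    fix x assume "x \<in> S" then show "norm (f x) \<le> B" using S_sph assms(2) by blast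
  qed
  show "f \<in> borel_measurable \<mu>" using meas assms(1) by blast
qed

lemma iid: "integrable \<mu> (\<lambda>y. y)" by (rule intg[of _ 1]) auto

lemma int0: "(\<integral>y. y \<partial>\<mu>) = 0" using bal unfolding balanced_def .

lemma lin0: "(\<integral>y. x \<bullet> y \<partial>\<mu>) = 0"
  using iid int0 by simp

lemma lin0': "(\<integral>y. y \<bullet> x \<partial>\<mu>) = 0"
  using iid int0 by simp

lemma ilin: "x \<in> S \<Longrightarrow> integrable \<mu> (\<lambda>y. x \<bullet> y)"
  by (rule intg[of _ 1]) (auto simp: ip_le)

lemma isq: "x \<in> S \<Longrightarrow> integrable \<mu> (\<lambda>y. (x \<bullet> y)^2)"
proof (rule intg[of _ 1])
  assume xS: "x \<in> S"
  show "\<forall>y\<in>sphere 0 1. norm ((x \<bullet> y)\<^sup>2) \<le> 1"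
  proof
    fix y :: 'a assume "y \<in> sphere 0 1"
    then have "\<bar>x \<bullet> y\<bar> \<le> 1" using ip_le[OF xS] by simp
    then have "\<bar>x \<bullet> y\<bar>^2 \<le> 1" using power_le_one[OF abs_ge_zero, of _ 2] by blast
    then show "norm ((x \<bullet> y)\<^sup>2) \<le> 1" by simp
  qed
qed simp

lemma sq: "x \<in> S \<Longrightarrow> (\<integral>y. (x \<bullet> y)^2 \<partial>\<mu>) = 1 / real d"
  using iso S_sph unfolding isotropic_def d_def by (auto simp: inner_commute)

definition h :: "'a \<Rightarrow> 'a \<Rightarrow> real" where
  "h x y = (x \<bullet> y + 1 / real d) * (1 - x \<bullet> y)"

lemma h_eq: "h x = (\<lambda>y. (1 / real d + (1 - 1 / real d) * (x \<bullet> y)) - (x \<bullet> y)^2)"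
  unfolding h_def by (auto simp: algebra_simps power2_eq_square)

lemma hint: "x \<in> S \<Longrightarrow> (\<integral>y. h x y \<partial>\<mu>) = 0"
proof -
  assume xS: "x \<in> S"
  have "(\<integral>y. h x y \<partial>\<mu>) = (\<integral>y. (1 / real d + (1 - 1 / real d) * (x \<bullet> y)) \<partial>\<mu>) - (\<integral>y. (x \<bullet> y)^2 \<partial>\<mu>)"
    unfolding h_eq using ilin[OF xS] isq[OF xS] by (simp add: Bochner_Integration.integral_diff)
  also have "(\<integral>y. (1 / real d + (1 - 1 / real d) * (x \<bullet> y)) \<partial>\<mu>) = 1 / real d + (1 - 1 / real d) * (\<integral>y. x \<bullet> y \<partial>\<mu>)"
    using ilin[OF xS] by (simp add: Bochner_Integration.integral_add prob_space)
  finally show ?thesis using lin0 sq[OF xS] by simp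
qed

lemma h_nonneg: "x \<in> S \<Longrightarrow> y \<in> S \<Longrightarrow> 0 \<le> h x y"
proof -
  assume xS: "x \<in> S" and yS: "y \<in> S"
  then have "x \<bullet> y \<ge> - 1 / real d" using supp unfolding S_def by auto
  moreover have "x \<bullet> y \<le> 1" using ip_le[OF xS unitS[OF yS]] by simp
  ultimately show "0 \<le> h x y" unfolding h_def by simp
qed

lemma hAE: "x \<in> S \<Longrightarrow> AE y in \<mu>. h x y = 0"
proof -
  assume xS: "x \<in> S"
  have "integrable \<mu> (h x)" unfolding h_eq using ilin[OF xS] isq[OF xS] by simp
  moreover have "AE y in \<mu>. 0 \<le> h x y"
    using AES by (rule eventually_mono) (rule h_nonneg[OF xS])
  ultimately show ?thesis using hint[OF xS] integral_nonneg_eq_0_iff_AE by blast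
qed

lemma h_zero: "x \<in> S \<Longrightarrow> y \<in> S \<Longrightarrow> h x y = 0"
proof (rule ccontr)
  assume xS: "x \<in> S" and yS: "y \<in> S" and ne: "h x y \<noteq> 0"
  then have pos: "h x y > 0" using h_nonneg[OF xS yS] by simp
  have "open {z. (\<lambda>_. 0) z < h x z}"
    by (rule open_Collect_less) (auto simp: h_def intro!: continuous_intros)
  then obtain e where e: "e > 0" "ball y e \<subseteq> {z. 0 < h x z}"
    using pos open_contains_ball[of "{z. 0 < h x z}"] by auto
  obtain N where N: "{z \<in> space \<mu>. \<not> h x z = 0} \<subseteq> N" "N \<in> null_sets \<mu>"
    using hAE[OF xS] by (auto elim!: AE_E)
  have "ball y e \<subseteq> N"
  proof
    fix z assume "z \<in> ball y e"
    then have "0 < h x z" using e(2) by blast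
    then show "z \<in> N" using N(1) space_eq by auto
  qed
  then have "emeasure \<mu> (ball y e) \<le> emeasure \<mu> N"
    by (rule emeasure_mono) (use N(2) in auto)
  then have "emeasure \<mu> (ball y e) = 0" using N(2) by auto
  then show False using yS e(1) unfolding S_def measure_support_def by auto
qed

lemma dich: "x \<in> S \<Longrightarrow> y \<in> S \<Longrightarrow> y = x \<or> x \<bullet> y = - 1 / real d"
proof -
  assume xS: "x \<in> S" and yS: "y \<in> S"
  have "h x y = 0" by (rule h_zero[OF xS yS])
  then have "x \<bullet> y = - 1 / real d \<or> x \<bullet> y = 1" unfolding h_def by auto
  moreover have "y = x" if "x \<bullet> y = 1"
  proof -
    have "(x - y) \<bullet> (x - y) = x \<bullet> x + y \<bullet> y - 2 * (x \<bullet> y)"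
      by (simp add: inner_diff_left inner_diff_right inner_commute)
    also have "\<dots> = 0" using that unitS[OF xS] unitS[OF yS] by (simp add: dot_square_norm)
    finally show ?thesis by simp
  qed
  ultimately show ?thesis by auto
qed

lemma probU: "prob UNIV = 1" using prob_space space_eq by simp

lemma singleton_sets: "{v} \<in> sets \<mu>" by (simp add: sets)

lemma point_mass: "v \<in> S \<Longrightarrow> measure \<mu> {v} = 1 / (real d + 1)"
proof -
  assume vS: "v \<in> S"
  define g where "g x = (1 + 1 / real d) * indicator {v} x - 1 / real d" for x :: 'a
  have "AE x in \<mu>. x \<bullet> v = g x"
    using AES
  proof (rule eventually_mono)
    fix x assume xS: "x \<in> S"
    show "x \<bullet> v = g x"
    proof (cases "x = v")
      case True
      then show ?thesis using unitS[OF vS] by (simp add: g_def dot_square_norm)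
    next
      case False
      then have "v \<bullet> x = - 1 / real d" using dich[OF vS xS] by auto
      then show ?thesis using False by (simp add: g_def inner_commute)
    qed
  qed
  then have "(\<integral>x. x \<bullet> v \<partial>\<mu>) = (\<integral>x. g x \<partial>\<mu>)"
    by (rule integral_cong_AE[rotated 2]) (auto intro!: meas simp: g_def singleton_sets)
  also have "(\<integral>x. g x \<partial>\<mu>) = (1 + 1 / real d) * measure \<mu> {v} - 1 / real d"
  proof -
    have ii: "integrable \<mu> (indicat_real {v})"
      using singleton_sets by (intro integrable_real_indicator) (auto simp: emeasure_eq_measure)
    show ?thesis unfolding g_def using ii
      by (subst Bochner_Integration.integral_diff) (auto simp: probU space_eq)
  qed
  finally have "(1 + 1 / real d) * measure \<mu> {v} - 1 / real d = 0" using lin0' by simp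
  then have "real d * ((real d + 1) * measure \<mu> {v}) = real d * 1" using dpos by (simp add: field_simps)
  then have E: "(real d + 1) * measure \<mu> {v} = 1" using dpos by simp
  have "real d + 1 \<noteq> 0" using dpos by simp
  then show ?thesis using E by (simp add: eq_divide_eq mult.commute)
qed

lemma measure_fin: "finite F \<Longrightarrow> F \<subseteq> S \<Longrightarrow> measure \<mu> F = real (card F) / (real d + 1)"
proof -
  assume F: "finite F" "F \<subseteq> S"
  have "measure \<mu> F = (\<Sum>x\<in>F. measure \<mu> {x})"
    using F(1) by (rule measure_eq_sum_singleton) (auto simp: singleton_sets)
  also have "\<dots> = (\<Sum>x\<in>F. 1 / (real d + 1))" using F(2) point_mass by (intro sum.cong) auto
  finally show ?thesis by simp
qed

lemma S_finite: "finite S"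
proof (rule ccontr)
  assume "infinite S"
  then obtain F where F: "finite F" "card F = d + 2" "F \<subseteq> S"
    using infinite_arbitrarily_large by blast
  have "measure \<mu> F \<le> 1" by (rule prob_le_1)
  then have "real (d + 2) / (real d + 1) \<le> 1" using measure_fin[OF F(1,3)] F(2) by simp
  then show False using dpos by (simp add: field_simps)
qed

lemma S_card: "card S = d + 1"
proof -
  have "measure \<mu> (UNIV - S) = 0" using Snull by (simp add: measure_def null_setsD1)
  then have "measure \<mu> S = 1" using prob_compl[OF S_sets] space_eq by simp
  then have "real (card S) / (real d + 1) = 1" using measure_fin[OF S_finite order_refl] by simp
  then have "real (card S) = real d + 1" using dpos by (simp add: field_simps)
  then show ?thesis by linarith
qed

lemma emeasure_A: "A \<in> sets borel \<Longrightarrow> emeasure \<mu> A = ennreal (real (card (A \<inter> S)) / real (d + 1))"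
proof -
  assume A: "A \<in> sets borel"
  have AS: "A \<inter> S \<in> sets \<mu>" using A S_sets sets by auto
  have "A - S \<in> null_sets \<mu>"
  proof -
    have "A - S \<in> sets \<mu>" using A S_sets sets by auto
    then show ?thesis using null_sets_subset[OF Snull] by blast
  qed
  then have "emeasure \<mu> ((A \<inter> S) \<union> (A - S)) = emeasure \<mu> (A \<inter> S)"
    by (rule emeasure_Un_null_set[OF AS])
  moreover have "(A \<inter> S) \<union> (A - S) = A" by auto
  ultimately have "emeasure \<mu> A = emeasure \<mu> (A \<inter> S)" by simp
  also have "\<dots> = ennreal (measure \<mu> (A \<inter> S))" by (rule emeasure_eq_measure)
  also have "measure \<mu> (A \<inter> S) = real (card (A \<inter> S)) / (real d + 1)"
    using S_finite by (intro measure_fin) auto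
  finally show ?thesis by simp
qed

lemma main:
  "\<exists>v :: nat \<Rightarrow> 'a.
           (\<forall>j\<in>{1..d+1}. norm (v j) = 1) \<and>
           (\<forall>i\<in>{1..d+1}. \<forall>j\<in>{1..d+1}. i \<noteq> j \<longrightarrow> v i \<bullet> v j = - 1 / real d) \<and>
           (\<forall>A\<in>sets borel. emeasure \<mu> A = ennreal (real (card {j\<in>{1..d+1}. v j \<in> A}) / real (d + 1)))"
proof -
  obtain v where v: "bij_betw v {1..d+1} S"
    using ex_bij_betw_nat_finite_1[OF S_finite] S_card by auto
  have vS: "v j \<in> S" if "j \<in> {1..d+1}" for j using v that by (auto simp: bij_betw_def)
  have inj: "inj_on v {1..d+1}" using v by (auto simp: bij_betw_def)
  have img: "v ` {1..d+1} = S" using v by (auto simp: bij_betw_def)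
  show ?thesis
  proof (intro exI[of _ v] conjI ballI impI)
    fix j assume "j \<in> {1..d+1}" then show "norm (v j) = 1" using vS unitS by blast
  next
    fix i j assume ij: "i \<in> {1..d+1}" "j \<in> {1..d+1}" "i \<noteq> j"
    then have "v j \<noteq> v i" using inj by (auto dest: inj_onD)
    then show "v i \<bullet> v j = - 1 / real d" using dich[OF vS[OF ij(1)] vS[OF ij(2)]] by auto
  next
    fix A :: "'a set" assume A: "A \<in> sets borel"
    have "v ` {j\<in>{1..d+1}. v j \<in> A} = A \<inter> S"
    proof
      show "v ` {j\<in>{1..d+1}. v j \<in> A} \<subseteq> A \<inter> S" using img by auto
      show "A \<inter> S \<subseteq> v ` {j\<in>{1..d+1}. v j \<in> A}"
      proof
        fix x assume x: "x \<in> A \<inter> S"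
        then obtain j where j: "j \<in> {1..d+1}" "x = v j" using img by blast
        then show "x \<in> v ` {j\<in>{1..d+1}. v j \<in> A}" using x by blast
      qed
    qed
    moreover have "inj_on v {j\<in>{1..d+1}. v j \<in> A}" using inj by (rule inj_on_subset) auto
    ultimately have "card {j\<in>{1..d+1}. v j \<in> A} = card (A \<inter> S)" by (metis card_image)
    then show "emeasure \<mu> A = ennreal (real (card {j\<in>{1..d+1}. v j \<in> A}) / real (d + 1))"
      using emeasure_A[OF A] by simp
  qed
qed

end

theorem theorem5p5:
  fixes \<mu> :: "'a::euclidean_space measure"
  defines "d \<equiv> DIM('a)"
  assumes "sphere_prob \<mu>" and "isotropic \<mu>" and "balanced \<mu>"
    and "\<forall>x\<in>measure_support \<mu>. \<forall>y\<in>measure_support \<mu>. x \<bullet> y \<ge> - 1 / real d"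
  shows "\<exists>v :: nat \<Rightarrow> 'a.
           (\<forall>j\<in>{1..d+1}. norm (v j) = 1) \<and>
           (\<forall>i\<in>{1..d+1}. \<forall>j\<in>{1..d+1}. i \<noteq> j \<longrightarrow> v i \<bullet> v j = - 1 / real d) \<and>
           (\<forall>A\<in>sets borel. emeasure \<mu> A = ennreal (real (card {j\<in>{1..d+1}. v j \<in> A}) / real (d + 1)))"
proof -
  have dd: "d = DIM('a)" by (simp add: d_def)
  interpret simp_setting \<mu> d
    by (rule simp_setting.intro[OF dd assms(2) assms(3) assms(4) assms(5)])
  show ?thesis by (rule main)
qed

end
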